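(* Let $V$ be a vector space over a field $\mathbb{K}$ and let $F,G$ be two bilinear forms on $V$. Let $\mathrm{Rad}_R(G)=\{w\in V: G(v,w)=0 \text{ for all } v\in V\}$. Then for all $u,v\in\mathcal{T}(V)$ and all $w\in \mathcal{T}(\mathrm{Rad}_R(G))\subseteq\mathcal{T}(V)$, $$\Lambda_F(\Lambda_G(u)(v))(w)=\Lambda_{F+G}(u)\big(\Lambda_F(v)(w)\big).$$
   Context: $\mathcal{T}(V)$ is the tensor algebra of $V$ (product $\otimes$), and $\mathcal{T}(\mathrm{Rad}_R(G))$ is the subalgebra generated by $\mathrm{Rad}_R(G)$. For $x\in V$, $e_x(u)=x\otimes u$. For $f\in V^*$, $i_f$ is the unique linear map on $\mathcal{T}(V)$ with $i_f(1)=0$ and $i_f(x\otimes u)=f(x)u-x\otimes i_f(u)$ ($x\in V$). For a bilinear form $F$ and $x\in V$, $i_x^F:=i_{f_x}$ with $f_x(y)=F(x,y)$. $\Lambda_F:\mathcal{T}(V)\to\mathrm{End}(\mathcal{T}(V))$ is the unique unital algebra homomorphism with $\Lambda_F(x)=e_x+i_x^F$ for $x\in V$. *)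

theory Defs
  imports Main "HOL-Library.Poly_Mapping"
begin

text \<open>Every vector space over a field K is free; we take V with an arbitrary
basis indexed by the type 'b, i.e. V = ('b \<Rightarrow>0 'k) (finitely supported coordinate
functions). The tensor algebra T(V) is then the free associative algebra on 'b:
finitely supported functions from words ('b list) to 'k, with concatenation
(convolution) product.\<close>

type_synonym ('b, 'k) vec = "'b \<Rightarrow>\<^sub>0 'k"
type_synonym ('b, 'k) tens = "'b list \<Rightarrow>\<^sub>0 'k"

definition smul :: "'k::field \<Rightarrow> ('a \<Rightarrow>\<^sub>0 'k) \<Rightarrow> ('a \<Rightarrow>\<^sub>0 'k)" where
  "smul c u = Poly_Mapping.map (\<lambda>a. c * a) u"

definition tmult :: "('b, 'k::field) tens \<Rightarrow> ('b, 'k) tens \<Rightarrow> ('b, 'k) tens" (infixl \<open>\<otimes>\<^sub>T\<close> 70) where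
  "tmult u v = Abs_poly_mapping (\<lambda>w. \<Sum>i\<le>length w. Poly_Mapping.lookup u (take i w) * Poly_Mapping.lookup v (drop i w))"

definition tone :: "('b, 'k::field) tens" where
  "tone = Poly_Mapping.single [] 1"

definition emb :: "('b, 'k::field) vec \<Rightarrow> ('b, 'k) tens" where
  "emb x = Abs_poly_mapping (\<lambda>w. case w of [b] \<Rightarrow> Poly_Mapping.lookup x b | _ \<Rightarrow> 0)"

definition lin_map :: "(('a \<Rightarrow>\<^sub>0 'k::field) \<Rightarrow> ('c \<Rightarrow>\<^sub>0 'k)) \<Rightarrow> bool" where
  "lin_map \<phi> \<longleftrightarrow> (\<forall>u v. \<phi> (u + v) = \<phi> u + \<phi> v) \<and> (\<forall>c u. \<phi> (smul c u) = smul c (\<phi> u))"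

definition lin_functional :: "(('b, 'k::field) vec \<Rightarrow> 'k) \<Rightarrow> bool" where
  "lin_functional f \<longleftrightarrow> (\<forall>x y. f (x + y) = f x + f y) \<and> (\<forall>c x. f (smul c x) = c * f x)"

definition bilinear_form :: "(('b, 'k::field) vec \<Rightarrow> ('b, 'k) vec \<Rightarrow> 'k) \<Rightarrow> bool" where
  "bilinear_form F \<longleftrightarrow> (\<forall>x. lin_functional (F x)) \<and> (\<forall>y. lin_functional (\<lambda>x. F x y))"

definition e_op :: "('b, 'k::field) vec \<Rightarrow> ('b, 'k) tens \<Rightarrow> ('b, 'k) tens" where
  "e_op x u = emb x \<otimes>\<^sub>T u"

definition i_op :: "(('b, 'k::field) vec \<Rightarrow> 'k) \<Rightarrow> ('b, 'k) tens \<Rightarrow> ('b, 'k) tens" where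
  "i_op f = (THE \<phi>. lin_map \<phi> \<and> \<phi> tone = 0 \<and>
      (\<forall>x u. \<phi> (emb x \<otimes>\<^sub>T u) = smul (f x) u - emb x \<otimes>\<^sub>T \<phi> u))"

definition iF_op :: "(('b, 'k::field) vec \<Rightarrow> ('b, 'k) vec \<Rightarrow> 'k) \<Rightarrow> ('b, 'k) vec \<Rightarrow> ('b, 'k) tens \<Rightarrow> ('b, 'k) tens" where
  "iF_op F x = i_op (\<lambda>y. F x y)"

definition unital_alg_hom :: "(('b, 'k::field) tens \<Rightarrow> ('b, 'k) tens \<Rightarrow> ('b, 'k) tens) \<Rightarrow> bool" where
  "unital_alg_hom \<Lambda> \<longleftrightarrow>
     (\<forall>u v. \<Lambda> (u + v) = (\<lambda>t. \<Lambda> u t + \<Lambda> v t)) \<and>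
     (\<forall>c u. \<Lambda> (smul c u) = (\<lambda>t. smul c (\<Lambda> u t))) \<and>
     (\<forall>u v. \<Lambda> (u \<otimes>\<^sub>T v) = \<Lambda> u \<circ> \<Lambda> v) \<and>
     \<Lambda> tone = id"

definition Lambda :: "(('b, 'k::field) vec \<Rightarrow> ('b, 'k) vec \<Rightarrow> 'k) \<Rightarrow> ('b, 'k) tens \<Rightarrow> ('b, 'k) tens \<Rightarrow> ('b, 'k) tens" where
  "Lambda F = (THE \<Lambda>. unital_alg_hom \<Lambda> \<and>
      (\<forall>x. \<Lambda> (emb x) = (\<lambda>t. e_op x t + iF_op F x t)))"

definition RadR :: "(('b, 'k::field) vec \<Rightarrow> ('b, 'k) vec \<Rightarrow> 'k) \<Rightarrow> ('b, 'k) vec set" where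
  "RadR G = {w. \<forall>v. G v w = 0}"

inductive_set subalg_gen :: "('b, 'k::field) vec set \<Rightarrow> ('b, 'k) tens set" for S where
  gen: "x \<in> S \<Longrightarrow> emb x \<in> subalg_gen S"
| one: "tone \<in> subalg_gen S"
| add: "u \<in> subalg_gen S \<Longrightarrow> v \<in> subalg_gen S \<Longrightarrow> u + v \<in> subalg_gen S"
| smul: "u \<in> subalg_gen S \<Longrightarrow> smul c u \<in> subalg_gen S"
| mult: "u \<in> subalg_gen S \<Longrightarrow> v \<in> subalg_gen S \<Longrightarrow> u \<otimes>\<^sub>T v \<in> subalg_gen S"

end

theory Submission
  imports Defs
begin

lemma lookup_smul [simp]: "Poly_Mapping.lookup (smul c u) k = c * Poly_Mapping.lookup u k"
  unfolding smul_def by (simp add: map.rep_eq when_def)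

lemma smul_add: "smul c (u + v) = smul c u + smul c v"
  by (rule poly_mapping_eqI) (simp add: lookup_add algebra_simps)
lemma smul_add2: "smul (c + d) u = smul c u + smul d u"
  by (rule poly_mapping_eqI) (simp add: lookup_add algebra_simps)
lemma smul_diff: "smul c (u - v) = smul c u - smul c v"
  by (rule poly_mapping_eqI) (simp add: lookup_minus algebra_simps)
lemma smul_smul [simp]: "smul c (smul d u) = smul (c * d) u"
  by (rule poly_mapping_eqI) (simp add: algebra_simps)
lemma smul_one [simp]: "smul 1 u = u"
  by (rule poly_mapping_eqI) simp
lemma smul_zero [simp]: "smul 0 u = 0"
  by (rule poly_mapping_eqI) simp
lemma smul_zero2 [simp]: "smul c 0 = 0"
  by (rule poly_mapping_eqI) simp
lemma smul_minus1: "smul (-1) u = - u"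
  by (rule poly_mapping_eqI) simp
lemma smul_single: "smul c (Poly_Mapping.single k d) = Poly_Mapping.single k (c * d)"
  by (rule poly_mapping_eqI) (simp add: lookup_single when_def)
lemma single_as_smul: "Poly_Mapping.single k (c::'k::field) = smul c (Poly_Mapping.single k 1)"
  by (simp add: smul_single)
lemma smul_sum: "smul c (sum f S) = (\<Sum>x\<in>S. smul c (f x))"
  by (rule poly_mapping_eqI) (simp add: lookup_sum sum_distrib_left)
lemma keys_smul: "Poly_Mapping.keys (smul c u) \<subseteq> Poly_Mapping.keys u"
  by (auto simp: in_keys_iff)

lemma pm_induct [case_names zero single add]:
  assumes "P 0" "\<And>k c. P (Poly_Mapping.single k c)" "\<And>f g. P f \<Longrightarrow> P g \<Longrightarrow> P (f + g)"
  shows "P f"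
proof (induction f rule: update_induct)
  case const then show ?case using assms(1) .
next
  case (update f a b)
  have "Poly_Mapping.update a b f = f + Poly_Mapping.single a b"
    using update(1) by (intro poly_mapping_eqI) (auto simp: lookup_update lookup_add lookup_single in_keys_iff when_def)
  then show ?case using update assms by simp
qed

lemma tmult_finite:
  "finite {w. (\<Sum>i\<le>length w. Poly_Mapping.lookup u (take i w) * Poly_Mapping.lookup v (drop i w)) \<noteq> (0::'k::field)}"
proof -
  have "{w. (\<Sum>i\<le>length w. Poly_Mapping.lookup u (take i w) * Poly_Mapping.lookup v (drop i w)) \<noteq> 0}
     \<subseteq> (\<lambda>(a,b). a @ b) ` (Poly_Mapping.keys u \<times> Poly_Mapping.keys v)"
  proof
    fix w assume "w \<in> {w. (\<Sum>i\<le>length w. Poly_Mapping.lookup u (take i w) * Poly_Mapping.lookup v (drop i w)) \<noteq> 0}"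
    then have ne: "(\<Sum>i\<le>length w. Poly_Mapping.lookup u (take i w) * Poly_Mapping.lookup v (drop i w)) \<noteq> 0" by simp
    have "\<exists>i. Poly_Mapping.lookup u (take i w) * Poly_Mapping.lookup v (drop i w) \<noteq> 0"
    proof (rule ccontr)
      assume "\<not> ?thesis"
      then have "(\<Sum>i\<le>length w. Poly_Mapping.lookup u (take i w) * Poly_Mapping.lookup v (drop i w)) = 0"
        by (intro sum.neutral) blast
      with ne show False by simp
    qed
    then obtain i where "Poly_Mapping.lookup u (take i w) * Poly_Mapping.lookup v (drop i w) \<noteq> 0" by blast
    then have "take i w \<in> Poly_Mapping.keys u" "drop i w \<in> Poly_Mapping.keys v" by (auto simp: in_keys_iff)
    then show "w \<in> (\<lambda>(a,b). a @ b) ` (Poly_Mapping.keys u \<times> Poly_Mapping.keys v)"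
      by (intro image_eqI[of _ _ "(take i w, drop i w)"]) auto
  qed
  then show ?thesis by (rule finite_subset) auto
qed

lemma lookup_tmult:
  "Poly_Mapping.lookup (u \<otimes>\<^sub>T v) w = (\<Sum>i\<le>length w. Poly_Mapping.lookup u (take i w) * Poly_Mapping.lookup v (drop i w))"
  unfolding tmult_def using tmult_finite[of u v] by simp

lemma tmult_single:
  "Poly_Mapping.single a c \<otimes>\<^sub>T Poly_Mapping.single b d = Poly_Mapping.single (a @ b) (c * d)"
proof (rule poly_mapping_eqI)
  fix w
  have eq: "(take i w = a \<and> drop i w = b) \<longleftrightarrow> (i = length a \<and> w = a @ b)" if "i \<le> length w" for i
    using that by (metis append_eq_conv_conj append_take_drop_id length_take min.absorb2)
  have "Poly_Mapping.lookup (Poly_Mapping.single a c \<otimes>\<^sub>T Poly_Mapping.single b d) w =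
        (\<Sum>i\<le>length w. if i = length a \<and> w = a @ b then c * d else 0)"
    unfolding lookup_tmult by (intro sum.cong refl) (auto simp: lookup_single when_def dest: eq)
  also have "\<dots> = Poly_Mapping.lookup (Poly_Mapping.single (a @ b) (c * d)) w"
    by (cases "w = a @ b") (auto simp: lookup_single when_def)
  finally show "Poly_Mapping.lookup (Poly_Mapping.single a c \<otimes>\<^sub>T Poly_Mapping.single b d) w = Poly_Mapping.lookup (Poly_Mapping.single (a @ b) (c * d)) w" .
qed

lemma tmult_add1: "(u + u') \<otimes>\<^sub>T v = u \<otimes>\<^sub>T v + u' \<otimes>\<^sub>T v"
  by (rule poly_mapping_eqI) (simp add: lookup_tmult lookup_add distrib_right sum.distrib)
lemma tmult_add2: "u \<otimes>\<^sub>T (v + v') = u \<otimes>\<^sub>T v + u \<otimes>\<^sub>T v'"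
  by (rule poly_mapping_eqI) (simp add: lookup_tmult lookup_add distrib_left sum.distrib)
lemma tmult_smul1: "smul c u \<otimes>\<^sub>T v = smul c (u \<otimes>\<^sub>T v)"
  by (rule poly_mapping_eqI) (simp add: lookup_tmult sum_distrib_left mult.assoc)
lemma tmult_smul2: "u \<otimes>\<^sub>T smul c v = smul c (u \<otimes>\<^sub>T v)"
  by (rule poly_mapping_eqI) (simp add: lookup_tmult sum_distrib_left algebra_simps)
lemma tmult_zero1 [simp]: "0 \<otimes>\<^sub>T v = 0"
  by (rule poly_mapping_eqI) (simp add: lookup_tmult)
lemma tmult_zero2 [simp]: "u \<otimes>\<^sub>T 0 = 0"
  by (rule poly_mapping_eqI) (simp add: lookup_tmult)
lemma tmult_diff1: "(u - u') \<otimes>\<^sub>T v = u \<otimes>\<^sub>T v - u' \<otimes>\<^sub>T v"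
  by (rule poly_mapping_eqI) (simp add: lookup_tmult lookup_minus left_diff_distrib sum_subtractf)
lemma tmult_diff2: "u \<otimes>\<^sub>T (v - v') = u \<otimes>\<^sub>T v - u \<otimes>\<^sub>T v'"
  by (rule poly_mapping_eqI) (simp add: lookup_tmult lookup_minus right_diff_distrib sum_subtractf)

lemma tmult_assoc: "(u \<otimes>\<^sub>T v) \<otimes>\<^sub>T z = u \<otimes>\<^sub>T (v \<otimes>\<^sub>T z)"
proof (induction u rule: pm_induct)
  case (single a c)
  show ?case
  proof (induction v rule: pm_induct)
    case (single b d)
    show ?case
      by (induction z rule: pm_induct) (simp_all add: tmult_single tmult_add2 mult.assoc)
  qed (simp_all add: tmult_add1 tmult_add2)
qed (simp_all add: tmult_add1)

lemma tone_tmult [simp]: "tone \<otimes>\<^sub>T u = u"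
  unfolding tone_def by (induction u rule: pm_induct) (simp_all add: tmult_single tmult_add2 mult.assoc)
lemma tmult_tone [simp]: "u \<otimes>\<^sub>T tone = u"
  unfolding tone_def by (induction u rule: pm_induct) (simp_all add: tmult_single tmult_add1)

lemma lookup_emb: "Poly_Mapping.lookup (emb x) w = (case w of [b] \<Rightarrow> Poly_Mapping.lookup x b | _ \<Rightarrow> 0)"
proof -
  have "{w. (case w of [b] \<Rightarrow> Poly_Mapping.lookup x b | _ \<Rightarrow> 0) \<noteq> 0} \<subseteq> (\<lambda>b. [b]) ` Poly_Mapping.keys x"
  proof
    fix w assume "w \<in> {w. (case w of [b] \<Rightarrow> Poly_Mapping.lookup x b | _ \<Rightarrow> 0) \<noteq> 0}"
    then show "w \<in> (\<lambda>b. [b]) ` Poly_Mapping.keys x"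
      by (cases w rule: list.exhaust; cases "tl w") (auto simp: in_keys_iff split: list.splits)
  qed
  then have "finite {w. (case w of [b] \<Rightarrow> Poly_Mapping.lookup x b | _ \<Rightarrow> 0) \<noteq> 0}"
    by (rule finite_subset) auto
  then show ?thesis unfolding emb_def by simp
qed

lemma emb_single: "emb (Poly_Mapping.single b c) = Poly_Mapping.single [b] c"
  by (rule poly_mapping_eqI) (auto simp: lookup_emb lookup_single when_def split: list.splits)
lemma emb_add: "emb (x + y) = emb x + emb y"
  by (rule poly_mapping_eqI) (auto simp: lookup_emb lookup_add split: list.splits)
lemma emb_smul: "emb (smul c x) = smul c (emb x)"
  by (rule poly_mapping_eqI) (auto simp: lookup_emb split: list.splits)
lemma emb_zero [simp]: "emb 0 = 0"
  by (rule poly_mapping_eqI) (auto simp: lookup_emb split: list.splits)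

lemma tens_induct [case_names one emb add smul]:
  fixes P :: "('b, 'k::field) tens \<Rightarrow> bool"
  assumes one: "P tone" and emb: "\<And>x u. P u \<Longrightarrow> P (emb x \<otimes>\<^sub>T u)"
    and add: "\<And>u v. P u \<Longrightarrow> P v \<Longrightarrow> P (u + v)" and sm: "\<And>c u. P u \<Longrightarrow> P (smul c u)"
  shows "P u"
proof (induction u rule: pm_induct)
  case zero
  have "P (smul 0 tone)" using sm one by blast
  then show ?case by simp
next
  case (single w c)
  show ?case
  proof (induction w arbitrary: c)
    case Nil
    have "P (smul c tone)" using sm one by blast
    then show ?case by (simp add: tone_def smul_single)
  next
    case (Cons b w)
    have "P (emb (Poly_Mapping.single b 1) \<otimes>\<^sub>T Poly_Mapping.single w c)" using emb Cons by blast
    then show ?case by (simp add: emb_single tmult_single)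
  qed
next
  case (add f g) then show ?case using assms by blast
qed

lemma lin_map_add: "lin_map \<phi> \<Longrightarrow> \<phi> (u + v) = \<phi> u + \<phi> v"
  unfolding lin_map_def by blast
lemma lin_map_smul: "lin_map \<phi> \<Longrightarrow> \<phi> (smul c u) = smul c (\<phi> u)"
  unfolding lin_map_def by blast
lemma lin_map_zero: "lin_map \<phi> \<Longrightarrow> \<phi> 0 = 0"
  using lin_map_smul[of \<phi> 0 0] by simp
lemma lin_map_uminus: "lin_map \<phi> \<Longrightarrow> \<phi> (- u) = - \<phi> u"
  using lin_map_smul[of \<phi> "-1" u] by (simp add: smul_minus1)
lemma lin_map_diff: "lin_map \<phi> \<Longrightarrow> \<phi> (u - v) = \<phi> u - \<phi> v"
  using lin_map_add[of \<phi> u "-v"] lin_map_uminus[of \<phi> v] by simp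

lemma lin_functional_zero: "lin_functional f \<Longrightarrow> f 0 = 0"
  unfolding lin_functional_def by (metis smul_zero mult_zero_left)


definition spec_i :: "(('b, 'k::field) vec \<Rightarrow> 'k) \<Rightarrow> (('b, 'k) tens \<Rightarrow> ('b, 'k) tens) \<Rightarrow> bool" where
  "spec_i f \<phi> \<longleftrightarrow> lin_map \<phi> \<and> \<phi> tone = 0 \<and>
      (\<forall>x u. \<phi> (emb x \<otimes>\<^sub>T u) = smul (f x) u - emb x \<otimes>\<^sub>T \<phi> u)"

lemma spec_i_unique:
  assumes "spec_i f \<phi>" "spec_i f \<psi>" shows "\<phi> = \<psi>"
proof
  fix u show "\<phi> u = \<psi> u"
  proof (induction u rule: tens_induct)
    case one then show ?case using assms unfolding spec_i_def by simp
  next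
    case (emb x u) then show ?case using assms unfolding spec_i_def by simp
  next
    case (add u v) then show ?case using assms unfolding spec_i_def by (simp add: lin_map_add)
  next
    case (smul c u) then show ?case using assms unfolding spec_i_def by (simp add: lin_map_smul)
  qed
qed

definition ext :: "('b list \<Rightarrow> ('b, 'k::field) tens) \<Rightarrow> ('b, 'k) tens \<Rightarrow> ('b, 'k) tens" where
  "ext h u = (\<Sum>w\<in>Poly_Mapping.keys u. smul (Poly_Mapping.lookup u w) (h w))"

lemma ext_superset:
  assumes "finite S" "Poly_Mapping.keys u \<subseteq> S"
  shows "ext h u = (\<Sum>w\<in>S. smul (Poly_Mapping.lookup u w) (h w))"
  unfolding ext_def using assms
  by (intro sum.mono_neutral_left) (auto simp: in_keys_iff)

lemma ext_add: "ext h (u + v) = ext h u + ext h v"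
proof -
  let ?S = "Poly_Mapping.keys u \<union> Poly_Mapping.keys v"
  have "ext h (u + v) = (\<Sum>w\<in>?S. smul (Poly_Mapping.lookup (u + v) w) (h w))"
    by (rule ext_superset) (auto simp: keys_add)
  also have "\<dots> = (\<Sum>w\<in>?S. smul (Poly_Mapping.lookup u w) (h w)) + (\<Sum>w\<in>?S. smul (Poly_Mapping.lookup v w) (h w))"
    by (simp add: lookup_add smul_add2 sum.distrib)
  also have "\<dots> = ext h u + ext h v"
  proof -
    have "ext h u = (\<Sum>w\<in>?S. smul (Poly_Mapping.lookup u w) (h w))" by (rule ext_superset) auto
    moreover have "ext h v = (\<Sum>w\<in>?S. smul (Poly_Mapping.lookup v w) (h w))" by (rule ext_superset) auto
    ultimately show ?thesis by simp
  qed
  finally show ?thesis .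
qed

lemma ext_smul: "ext h (smul c u) = smul c (ext h u)"
proof -
  have "ext h (smul c u) = (\<Sum>w\<in>Poly_Mapping.keys u. smul (Poly_Mapping.lookup (smul c u) w) (h w))"
    by (rule ext_superset) (auto simp: keys_smul)
  then show ?thesis by (simp add: ext_def smul_sum)
qed

lemma ext_single: "ext h (Poly_Mapping.single w c) = smul c (h w)"
  by (subst ext_superset[of "{w}"]) (auto simp: lookup_single)

lemma ext_zero [simp]: "ext h 0 = 0"
  by (simp add: ext_def)

lemma lin_map_ext: "lin_map (ext h)"
  unfolding lin_map_def by (simp add: ext_add ext_smul)

lemma ext_fun_add: "ext (\<lambda>w. h1 w + h2 w) u = ext h1 u + ext h2 u"
  by (simp add: ext_def smul_add sum.distrib)
lemma ext_fun_smul: "ext (\<lambda>w. smul c (h w)) u = smul c (ext h u)"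
  by (simp add: ext_def smul_sum mult.commute)

fun i0 :: "(('b, 'k::field) vec \<Rightarrow> 'k) \<Rightarrow> 'b list \<Rightarrow> ('b, 'k) tens" where
  "i0 f [] = 0"
| "i0 f (b # w) = smul (f (Poly_Mapping.single b 1)) (Poly_Mapping.single w 1)
      - Poly_Mapping.single [b] 1 \<otimes>\<^sub>T i0 f w"

lemma spec_i_exists:
  assumes f: "lin_functional f"
  shows "spec_i f (ext (i0 f))"
  unfolding spec_i_def
proof (intro conjI allI)
  show "lin_map (ext (i0 f))" by (rule lin_map_ext)
  show "ext (i0 f) tone = 0" by (simp add: tone_def ext_single)
next
  fix x :: "('a, 'b) vec" and u :: "('a, 'b) tens"
  have fadd: "f (x + y) = f x + f y" for x y using f unfolding lin_functional_def by blast
  have fsm: "f (smul c x) = c * f x" for c x using f unfolding lin_functional_def by blast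
  show "ext (i0 f) (emb x \<otimes>\<^sub>T u) = smul (f x) u - emb x \<otimes>\<^sub>T ext (i0 f) u"
  proof (induction x arbitrary: u rule: pm_induct)
    case zero then show ?case by (simp add: lin_functional_zero[OF f])
  next
    case (add x y)
    then show ?case
      by (simp add: emb_add tmult_add1 ext_add fadd smul_add2)
  next
    case (single b c)
    show ?case
    proof (induction u rule: pm_induct)
      case zero then show ?case by simp
    next
      case (add u v)
      then show ?case by (simp add: tmult_add2 ext_add smul_add)
    next
      case (single w d)
      have fb: "f (Poly_Mapping.single b c) = c * f (Poly_Mapping.single b 1)"
        by (subst single_as_smul) (simp add: fsm)
      show ?case
        apply (simp add: emb_single tmult_single ext_single fb smul_diff tmult_smul2)
        apply (simp add: single_as_smul[of w d] single_as_smul[of "[b]" c] tmult_smul1 tmult_smul2 mult_ac)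
        done
    qed
  qed
qed

lemma i_op_spec: "lin_functional f \<Longrightarrow> spec_i f (i_op f)"
  unfolding i_op_def spec_i_def[symmetric]
  by (rule theI[of _ "ext (i0 f)"]) (auto intro: spec_i_exists spec_i_unique)

lemma i_op_eqI: "lin_functional f \<Longrightarrow> spec_i f \<phi> \<Longrightarrow> i_op f = \<phi>"
  using i_op_spec spec_i_unique by blast

lemma lin_functional_add: "lin_functional f \<Longrightarrow> lin_functional g \<Longrightarrow> lin_functional (\<lambda>z. f z + g z)"
  unfolding lin_functional_def by (simp add: algebra_simps)
lemma lin_functional_smul: "lin_functional f \<Longrightarrow> lin_functional (\<lambda>z. c * f z)"
  unfolding lin_functional_def by (simp add: algebra_simps)

lemma i_op_add:
  assumes f: "lin_functional f" and g: "lin_functional g"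
  shows "i_op (\<lambda>z. f z + g z) = (\<lambda>t. i_op f t + i_op g t)"
proof (rule i_op_eqI[OF lin_functional_add[OF f g]])
  have sf: "spec_i f (i_op f)" and sg: "spec_i g (i_op g)" using f g by (auto intro: i_op_spec)
  then show "spec_i (\<lambda>z. f z + g z) (\<lambda>t. i_op f t + i_op g t)"
    unfolding spec_i_def lin_map_def
    by (simp add: smul_add smul_add2 tmult_add2 algebra_simps)
qed

lemma i_op_smul:
  assumes f: "lin_functional f"
  shows "i_op (\<lambda>z. c * f z) = (\<lambda>t. smul c (i_op f t))"
proof (rule i_op_eqI[OF lin_functional_smul[OF f]])
  have sf: "spec_i f (i_op f)" using f by (auto intro: i_op_spec)
  then show "spec_i (\<lambda>z. c * f z) (\<lambda>t. smul c (i_op f t))"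
    unfolding spec_i_def lin_map_def
    by (simp add: smul_add smul_diff tmult_smul2 mult.commute)
qed


definition Xop :: "(('b, 'k::field) vec \<Rightarrow> ('b, 'k) vec \<Rightarrow> 'k) \<Rightarrow> ('b, 'k) vec \<Rightarrow> ('b, 'k) tens \<Rightarrow> ('b, 'k) tens" where
  "Xop F x t = e_op x t + iF_op F x t"

definition spec_L :: "(('b, 'k::field) vec \<Rightarrow> ('b, 'k) vec \<Rightarrow> 'k) \<Rightarrow> (('b, 'k) tens \<Rightarrow> ('b, 'k) tens \<Rightarrow> ('b, 'k) tens) \<Rightarrow> bool" where
  "spec_L F \<Lambda> \<longleftrightarrow> unital_alg_hom \<Lambda> \<and> (\<forall>x. \<Lambda> (emb x) = (\<lambda>t. e_op x t + iF_op F x t))"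

lemma spec_L_unique:
  assumes "spec_L F A" "spec_L F B" shows "A = B"
proof
  fix u show "A u = B u"
  proof (induction u rule: tens_induct)
    case one then show ?case using assms unfolding spec_L_def unital_alg_hom_def by simp
  next
    case (emb x u) then show ?case using assms unfolding spec_L_def unital_alg_hom_def by simp
  next
    case (add u v) then show ?case using assms unfolding spec_L_def unital_alg_hom_def by simp
  next
    case (smul c u) then show ?case using assms unfolding spec_L_def unital_alg_hom_def by simp
  qed
qed

fun L0 :: "(('b, 'k::field) vec \<Rightarrow> ('b, 'k) vec \<Rightarrow> 'k) \<Rightarrow> 'b list \<Rightarrow> ('b, 'k) tens \<Rightarrow> ('b, 'k) tens" where
  "L0 F [] = id"
| "L0 F (b # w) = Xop F (Poly_Mapping.single b 1) \<circ> L0 F w"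

lemma L0_append: "L0 F (a @ b) = L0 F a \<circ> L0 F b"
  by (induction a) auto

lemma lin_map_Xop:
  assumes F: "bilinear_form F" shows "lin_map (Xop F x)"
proof -
  have "lin_functional (F x)" using F unfolding bilinear_form_def by blast
  then have "lin_map (i_op (F x))" using i_op_spec unfolding spec_i_def by blast
  then show ?thesis
    unfolding lin_map_def Xop_def e_op_def iF_op_def
    by (simp add: lin_map_add lin_map_smul tmult_add2 tmult_smul2 smul_add)
qed

lemma lin_map_L0: "bilinear_form F \<Longrightarrow> lin_map (L0 F w)"
proof (induction w)
  case Nil then show ?case by (simp add: lin_map_def)
next
  case (Cons b w)
  then show ?case using lin_map_Xop[OF Cons.prems, of "Poly_Mapping.single b 1"]
    by (simp add: lin_map_def)
qed

definition Lex :: "(('b, 'k::field) vec \<Rightarrow> ('b, 'k) vec \<Rightarrow> 'k) \<Rightarrow> ('b, 'k) tens \<Rightarrow> ('b, 'k) tens \<Rightarrow> ('b, 'k) tens" where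
  "Lex F u t = ext (\<lambda>w. L0 F w t) u"

lemma lin_map_Lex: "bilinear_form F \<Longrightarrow> lin_map (Lex F u)"
proof -
  assume F: "bilinear_form F"
  have a: "L0 F w (s + t) = L0 F w s + L0 F w t" for w s t using lin_map_add[OF lin_map_L0[OF F]] .
  have b: "L0 F w (smul c s) = smul c (L0 F w s)" for w c s using lin_map_smul[OF lin_map_L0[OF F]] .
  show ?thesis unfolding lin_map_def Lex_def by (simp add: a b ext_fun_add ext_fun_smul)
qed

lemma Xop_add:
  assumes F: "bilinear_form F" shows "Xop F (x + y) t = Xop F x t + Xop F y t"
proof -
  have lx: "lin_functional (F x)" and ly: "lin_functional (F y)" using F unfolding bilinear_form_def by blast+
  have "F (x + y) = (\<lambda>z. F x z + F y z)"
    using F unfolding bilinear_form_def lin_functional_def by (auto simp: fun_eq_iff)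
  then have "iF_op F (x + y) t = iF_op F x t + iF_op F y t"
    unfolding iF_op_def using i_op_add[OF lx ly] by (simp add: eta_contract_eq)
  then show ?thesis unfolding Xop_def e_op_def by (simp add: emb_add tmult_add1 algebra_simps)
qed

lemma Xop_smul:
  assumes F: "bilinear_form F" shows "Xop F (smul c x) t = smul c (Xop F x t)"
proof -
  have lx: "lin_functional (F x)" using F unfolding bilinear_form_def by blast+
  have "F (smul c x) = (\<lambda>z. c * F x z)"
    using F unfolding bilinear_form_def lin_functional_def by (auto simp: fun_eq_iff)
  then have "iF_op F (smul c x) t = smul c (iF_op F x t)"
    unfolding iF_op_def using i_op_smul[OF lx] by simp
  then show ?thesis unfolding Xop_def e_op_def by (simp add: emb_smul tmult_smul1 smul_add)
qed

lemma spec_L_exists: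
  assumes F: "bilinear_form F"
  shows "spec_L F (Lex F)"
  unfolding spec_L_def unital_alg_hom_def
proof (intro conjI allI)
  fix u v
  show "Lex F (u + v) = (\<lambda>t. Lex F u t + Lex F v t)" by (simp add: Lex_def ext_add fun_eq_iff)
  fix c
  show "Lex F (smul c u) = (\<lambda>t. smul c (Lex F u t))" by (simp add: Lex_def ext_smul fun_eq_iff)
next
  show "Lex F tone = id" by (auto simp: Lex_def tone_def ext_single fun_eq_iff)
next
  fix u v :: "('a, 'b) tens"
  show "Lex F (u \<otimes>\<^sub>T v) = Lex F u \<circ> Lex F v"
  proof
    fix t
    show "Lex F (u \<otimes>\<^sub>T v) t = (Lex F u \<circ> Lex F v) t"
    proof (induction u rule: pm_induct)
      case zero then show ?case by (simp add: Lex_def)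
    next
      case (add u1 u2) then show ?case by (simp add: Lex_def tmult_add1 ext_add)
    next
      case (single a c)
      have lm: "lin_map (Lex F (Poly_Mapping.single a c))" by (rule lin_map_Lex[OF F])
      show ?case
      proof (induction v rule: pm_induct)
        case zero then show ?case by (simp add: Lex_def lin_map_zero[OF lm, unfolded Lex_def])
      next
        case (add v1 v2) then show ?case
          using lin_map_add[OF lm] by (simp add: Lex_def tmult_add2 ext_add)
      next
        case (single b d)
        show ?case
          using lin_map_smul[OF lin_map_L0[OF F]]
          by (simp add: Lex_def tmult_single ext_single L0_append mult.commute)
      qed
    qed
  qed
next
  fix x :: "('a, 'b) vec"
  show "Lex F (emb x) = (\<lambda>t. e_op x t + iF_op F x t)"
  proof
    fix t
    show "Lex F (emb x) t = e_op x t + iF_op F x t"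
      unfolding Xop_def[symmetric]
    proof (induction x rule: pm_induct)
      case zero
      have "Xop F 0 t = Xop F 0 t + Xop F 0 t" using Xop_add[OF F, of 0 0 t] by simp
      then show ?case by (simp add: Lex_def)
    next
      case (add x y) then show ?case by (simp add: Lex_def emb_add ext_add Xop_add[OF F])
    next
      case (single b c)
      have "Xop F (Poly_Mapping.single b c) t = smul c (Xop F (Poly_Mapping.single b 1) t)"
        by (subst single_as_smul) (simp add: Xop_smul[OF F])
      then show ?case
        by (simp add: Lex_def emb_single ext_single)
    qed
  qed
qed

lemma Lambda_spec: "bilinear_form F \<Longrightarrow> spec_L F (Lambda F)"
  unfolding Lambda_def spec_L_def[symmetric]
  by (rule theI[of _ "Lex F"]) (auto intro: spec_L_exists spec_L_unique)


context
  fixes F :: "('b, 'k::field) vec \<Rightarrow> ('b, 'k) vec \<Rightarrow> 'k"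
  assumes F: "bilinear_form F"
begin

lemma L_add: "Lambda F (u + v) t = Lambda F u t + Lambda F v t"
  using Lambda_spec[OF F] unfolding spec_L_def unital_alg_hom_def by simp
lemma L_smul: "Lambda F (smul c u) t = smul c (Lambda F u t)"
  using Lambda_spec[OF F] unfolding spec_L_def unital_alg_hom_def by simp
lemma L_mult: "Lambda F (u \<otimes>\<^sub>T v) t = Lambda F u (Lambda F v t)"
  using Lambda_spec[OF F] unfolding spec_L_def unital_alg_hom_def by simp
lemma L_one: "Lambda F tone t = t"
  using Lambda_spec[OF F] unfolding spec_L_def unital_alg_hom_def by simp
lemma L_emb: "Lambda F (emb x) t = emb x \<otimes>\<^sub>T t + i_op (F x) t"
  using Lambda_spec[OF F] unfolding spec_L_def e_op_def iF_op_def by simp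
lemma L_zero: "Lambda F 0 t = 0"
  using L_smul[of 0 0 t] by simp
lemma L_uminus: "Lambda F (- u) t = - Lambda F u t"
  using L_smul[of "-1" u t] by (simp add: smul_minus1)
lemma L_diff: "Lambda F (u - v) t = Lambda F u t - Lambda F v t"
  using L_add[of u "-v" t] L_uminus[of v t] by simp

end

lemma spec_i_facts:
  assumes "lin_functional f"
  shows "i_op f (u + v) = i_op f u + i_op f v" "i_op f (smul c u) = smul c (i_op f u)"
    "i_op f (u - v) = i_op f u - i_op f v" "i_op f 0 = 0" "i_op f tone = 0"
    "i_op f (emb x \<otimes>\<^sub>T u) = smul (f x) u - emb x \<otimes>\<^sub>T i_op f u"
  using i_op_spec[OF assms] unfolding spec_i_def
  by (auto simp: lin_map_add lin_map_smul lin_map_diff lin_map_zero)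

lemma anticomm:
  assumes f: "lin_functional f" and g: "lin_functional g"
  shows "i_op f (i_op g z) + i_op g (i_op f z) = 0"
proof (induction z rule: tens_induct)
  case one then show ?case by (simp add: spec_i_facts[OF f] spec_i_facts[OF g])
next
  case (emb y z)
  have "i_op f (i_op g (emb y \<otimes>\<^sub>T z)) + i_op g (i_op f (emb y \<otimes>\<^sub>T z))
      = emb y \<otimes>\<^sub>T (i_op f (i_op g z) + i_op g (i_op f z))"
    by (simp add: spec_i_facts[OF f] spec_i_facts[OF g] tmult_add2)
  then show ?case using emb by simp
next
  case (add u v) then show ?case
    by (simp add: spec_i_facts[OF f] spec_i_facts[OF g] algebra_simps)
next
  case (smul c u) then show ?case
    by (simp add: spec_i_facts[OF f] spec_i_facts[OF g] smul_add[symmetric])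
qed

lemma rad_vanish:
  assumes G: "bilinear_form G" and w: "w \<in> subalg_gen (RadR G)"
  shows "i_op (G x) w = 0"
proof -
  have f: "lin_functional (G x)" using G unfolding bilinear_form_def by blast
  note sf = spec_i_facts[OF f]
  have Q: "\<forall>u. i_op (G x) (u \<otimes>\<^sub>T w) = i_op (G x) u \<otimes>\<^sub>T w" using w
  proof (induction w rule: subalg_gen.induct)
    case (gen y)
    then have Gy: "G x y = 0" unfolding RadR_def by blast
    show ?case
    proof
      fix u show "i_op (G x) (u \<otimes>\<^sub>T emb y) = i_op (G x) u \<otimes>\<^sub>T emb y"
      proof (induction u rule: tens_induct)
        case one
        have "i_op (G x) (emb y) = 0" using sf(6)[of y tone] by (simp add: sf Gy)
        then show ?case by (simp add: sf)
      next
        case (emb z u)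
        then show ?case by (simp add: sf tmult_assoc tmult_diff1 tmult_smul1)
      next
        case (add u v) then show ?case by (simp add: sf tmult_add1)
      next
        case (smul c u) then show ?case by (simp add: sf tmult_smul1)
      qed
    qed
  next
    case one then show ?case by simp
  next
    case (add u v) then show ?case by (simp add: sf tmult_add2)
  next
    case (smul u c) then show ?case by (simp add: sf tmult_smul2)
  next
    case (mult u v) then show ?case by (simp add: tmult_assoc[symmetric])
  qed
  have "i_op (G x) w = i_op (G x) (tone \<otimes>\<^sub>T w)" by simp
  also have "\<dots> = 0" using Q[rule_format, of tone] by (simp add: sf)
  finally show ?thesis .
qed

lemma commute_i:
  assumes F: "bilinear_form F" and G: "bilinear_form G" and w: "w \<in> subalg_gen (RadR G)"
  shows "i_op (G x) (Lambda F v w) = Lambda F (i_op (G x) v) w"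
proof -
  have f: "lin_functional (G x)" using G unfolding bilinear_form_def by blast
  note sf = spec_i_facts[OF f]
  show ?thesis
  proof (induction v rule: tens_induct)
    case one then show ?case using rad_vanish[OF G w] by (simp add: sf L_one[OF F] L_zero[OF F])
  next
    case (emb y v)
    have fy: "lin_functional (F y)" using F unfolding bilinear_form_def by blast
    define z where "z = Lambda F v w"
    have ac: "i_op (G x) (i_op (F y) z) = - i_op (F y) (i_op (G x) z)"
      using anticomm[OF f fy, of z] by (simp add: eq_neg_iff_add_eq_0)
    have IH: "i_op (G x) (Lambda F v w) = Lambda F (i_op (G x) v) w" using emb by simp
    have "i_op (G x) (Lambda F (emb y \<otimes>\<^sub>T v) w) = i_op (G x) (emb y \<otimes>\<^sub>T z + i_op (F y) z)"
      by (simp add: L_mult[OF F] L_emb[OF F] z_def)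
    also have "\<dots> = smul (G x y) z - emb y \<otimes>\<^sub>T i_op (G x) z - i_op (F y) (i_op (G x) z)"
      by (simp add: sf ac)
    also have "\<dots> = Lambda F (i_op (G x) (emb y \<otimes>\<^sub>T v)) w"
      by (simp add: sf L_diff[OF F] L_smul[OF F] L_mult[OF F] L_emb[OF F] IH z_def)
    finally show ?case .
  next
    case (add u v) then show ?case by (simp add: sf L_add[OF F])
  next
    case (smul c u) then show ?case by (simp add: sf L_smul[OF F])
  qed
qed

lemma bilinear_sum: "bilinear_form F \<Longrightarrow> bilinear_form G \<Longrightarrow> bilinear_form (\<lambda>x y. F x y + G x y)"
  unfolding bilinear_form_def lin_functional_def by (simp add: algebra_simps)

theorem mainTheorem2:
  fixes F G :: "('b, 'k::field) vec \<Rightarrow> ('b, 'k) vec \<Rightarrow> 'k"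
    and u v w :: "('b, 'k) tens"
  assumes "bilinear_form F" and "bilinear_form G"
    and "w \<in> subalg_gen (RadR G)"
  shows "Lambda F (Lambda G u v) w = Lambda (\<lambda>x y. F x y + G x y) u (Lambda F v w)"
proof -
  note F = assms(1) and G = assms(2) and w = assms(3)
  define H where "H = (\<lambda>x y. F x y + G x y)"
  have H: "bilinear_form H" unfolding H_def using bilinear_sum[OF F G] .
  have "\<forall>v. Lambda F (Lambda G u v) w = Lambda H u (Lambda F v w)"
  proof (induction u rule: tens_induct)
    case one then show ?case by (simp add: L_one[OF G] L_one[OF H])
  next
    case (emb x u)
    show ?case
    proof
      fix v
      define v' where "v' = Lambda G u v"
      define z where "z = Lambda F v' w"
      have fx: "lin_functional (F x)" and gx: "lin_functional (G x)"
        using F G unfolding bilinear_form_def by blast+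
      have Hx: "H x = (\<lambda>y. F x y + G x y)" unfolding H_def by simp
      have "Lambda F (Lambda G (emb x \<otimes>\<^sub>T u) v) w = Lambda F (emb x \<otimes>\<^sub>T v' + i_op (G x) v') w"
        by (simp add: L_mult[OF G] L_emb[OF G] v'_def)
      also have "\<dots> = Lambda F (emb x \<otimes>\<^sub>T v') w + Lambda F (i_op (G x) v') w"
        by (rule L_add[OF F])
      also have "\<dots> = Lambda F (emb x) z + i_op (G x) z"
        by (simp add: L_mult[OF F] z_def commute_i[OF F G w])
      also have "\<dots> = emb x \<otimes>\<^sub>T z + i_op (F x) z + i_op (G x) z"
        by (simp add: L_emb[OF F])
      also have "\<dots> = Lambda H (emb x \<otimes>\<^sub>T u) (Lambda F v w)"
        using emb[rule_format, of v]
        by (simp add: L_mult[OF H] L_emb[OF H] Hx i_op_add[OF fx gx] v'_def z_def)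
      finally show "Lambda F (Lambda G (emb x \<otimes>\<^sub>T u) v) w = Lambda H (emb x \<otimes>\<^sub>T u) (Lambda F v w)" .
    qed
  next
    case (add u1 u2) then show ?case by (simp add: L_add[OF G] L_add[OF F] L_add[OF H])
  next
    case (smul c u) then show ?case by (simp add: L_smul[OF G] L_smul[OF F] L_smul[OF H])
  qed
  then show ?thesis unfolding H_def by blast
qed

end
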